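(* Let $D$ be a positive squarefree integer with $N(\varepsilon)=-1$. Then $Z_D^{\mathrm{odd}}(s)$ and $Z_D^{\mathrm{even}}(s)$ continue meromorphically to $\mathbb{C}$ via \[ Z_D^{\mathrm{odd}}(s)=q^{s/2}\sum_{k\ge0}\binom{-s}{k}\frac{\varepsilon^{s+2k}}{\varepsilon^{2s+4k}-1},\qquad Z_D^{\mathrm{even}}(s)=q^{s/2}\sum_{k\ge0}\binom{-s}{k}\frac{(-1)^k}{\varepsilon^{2s+4k}-1}, \] where the series converge absolutely for all $s$ away from the poles of the summands and agree with the defining Dirichlet series for $\operatorname{Re}s>0$. Both functions have simple poles at $s=-2k+\frac{\pi m}{\log\varepsilon}i$ for $k\in\mathbb{Z}_{\ge0}$, $m\in\mathbb{Z}$.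
   Context: $D$ positive squarefree, $\mathcal{O}_D$ the ring of integers of $\mathbb{Q}(\sqrt D)\subset\mathbb{R}$, $\varepsilon>1$ its fundamental unit, $\overline{\varepsilon}$ its conjugate, $N$ the norm. $q=D$ if $D\equiv1\bmod4$, else $q=4D$. $F_D(n)=(\varepsilon^n-\overline{\varepsilon}^{\,n})/\sqrt q$. For $\operatorname{Re}s>0$, $Z_D^{\mathrm{odd}}(s)=\sum_{n\ge1}F_D(2n-1)^{-s}$ and $Z_D^{\mathrm{even}}(s)=\sum_{n\ge1}F_D(2n)^{-s}$. The generalized binomial coefficient is $\binom{-s}{k}=\frac{(-s)(-s-1)\cdots(-s-k+1)}{k!}$, and $q^{s/2}$, $\varepsilon^{s}$ use real positive bases with principal powers. *)

theory Defs
  imports "HOL-Complex_Analysis.Complex_Analysis" "HOL-Computational_Algebra.Squarefree"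
begin

text \<open>Real quadratic field Q(sqrt D) embedded in the reals. The ring of integers is
  Z[omega] with omega = (1+sqrt D)/2 if D = 1 mod 4 and omega = sqrt D otherwise.\<close>

definition omegaD :: "int \<Rightarrow> real" where
  "omegaD D = (if D mod 4 = 1 then (1 + sqrt (real_of_int D)) / 2 else sqrt (real_of_int D))"

definition omegaD_conj :: "int \<Rightarrow> real" where
  "omegaD_conj D = (if D mod 4 = 1 then (1 - sqrt (real_of_int D)) / 2 else - sqrt (real_of_int D))"

definition in_OD :: "int \<Rightarrow> real \<Rightarrow> bool" where
  "in_OD D x \<longleftrightarrow> (\<exists>a b :: int. x = of_int a + of_int b * omegaD D)"

definition qconj :: "int \<Rightarrow> real \<Rightarrow> real" where
  "qconj D x = (THE y. \<exists>a b :: int. x = of_int a + of_int b * omegaD D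
                          \<and> y = of_int a + of_int b * omegaD_conj D)"

definition qnorm :: "int \<Rightarrow> real \<Rightarrow> real" where
  "qnorm D x = x * qconj D x"

definition is_unit_OD :: "int \<Rightarrow> real \<Rightarrow> bool" where
  "is_unit_OD D u \<longleftrightarrow> u \<noteq> 0 \<and> in_OD D u \<and> in_OD D (inverse u)"

definition is_fundamental_unit :: "int \<Rightarrow> real \<Rightarrow> bool" where
  "is_fundamental_unit D e \<longleftrightarrow> is_unit_OD D e \<and> e > 1 \<and>
     (\<forall>u. is_unit_OD D u \<and> u > 1 \<longrightarrow> e \<le> u)"

definition qD :: "int \<Rightarrow> int" where
  "qD D = (if D mod 4 = 1 then D else 4 * D)"

definition FD :: "int \<Rightarrow> real \<Rightarrow> nat \<Rightarrow> real" where
  "FD D e n = (e ^ n - qconj D e ^ n) / sqrt (real_of_int (qD D))"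

definition Z_odd :: "int \<Rightarrow> real \<Rightarrow> complex \<Rightarrow> complex" where
  "Z_odd D e s = (\<Sum>n. complex_of_real (FD D e (2 * n + 1)) powr (- s))"

definition Z_even :: "int \<Rightarrow> real \<Rightarrow> complex \<Rightarrow> complex" where
  "Z_even D e s = (\<Sum>n. complex_of_real (FD D e (2 * n + 2)) powr (- s))"

definition G_odd_term :: "int \<Rightarrow> real \<Rightarrow> complex \<Rightarrow> nat \<Rightarrow> complex" where
  "G_odd_term D e s k = ((- s) gchoose k) *
     (complex_of_real e powr (s + 2 * of_nat k)) /
     (complex_of_real e powr (2 * s + 4 * of_nat k) - 1)"

definition G_even_term :: "int \<Rightarrow> real \<Rightarrow> complex \<Rightarrow> nat \<Rightarrow> complex" where
  "G_even_term D e s k = ((- s) gchoose k) * (- 1) ^ k /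
     (complex_of_real e powr (2 * s + 4 * of_nat k) - 1)"

definition G_odd :: "int \<Rightarrow> real \<Rightarrow> complex \<Rightarrow> complex" where
  "G_odd D e s = complex_of_real (real_of_int (qD D)) powr (s / 2) * (\<Sum>k. G_odd_term D e s k)"

definition G_even :: "int \<Rightarrow> real \<Rightarrow> complex \<Rightarrow> complex" where
  "G_even D e s = complex_of_real (real_of_int (qD D)) powr (s / 2) * (\<Sum>k. G_even_term D e s k)"

definition pole_set :: "real \<Rightarrow> complex set" where
  "pole_set e = {- 2 * of_nat k + complex_of_real (pi * of_int m / ln e) * \<i> | (k :: nat) (m :: int). True}"

end

theory Submission
  imports Defs
begin

lemma double_sum_swap:
  fixes f :: "nat \<Rightarrow> nat \<Rightarrow> complex"
  assumes a: "\<And>n. summable (\<lambda>k. norm (f n k))"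
      and b: "summable (\<lambda>n. \<Sum>k. norm (f n k))"
      and c: "\<And>k. summable (\<lambda>n. norm (f n k))"
  shows "summable (\<lambda>n. \<Sum>k. f n k) \<and> summable (\<lambda>k. \<Sum>n. f n k) \<and>
         (\<Sum>n. \<Sum>k. f n k) = (\<Sum>k. \<Sum>n. f n k)"
proof -
  have g1: "((\<lambda>k. norm (f n k)) has_sum (\<Sum>k. norm (f n k))) UNIV" for n
    using a[of n] by (intro sums_nonneg_imp_has_sum) (auto simp: summable_sums)
  have g2: "(\<lambda>n. \<Sum>k. norm (f n k)) summable_on UNIV"
    using b by (subst summable_on_UNIV_nonneg_real_iff) (auto intro: suminf_nonneg a)
  have "(\<lambda>(n,k). norm (f n k)) summable_on Sigma UNIV (\<lambda>_. UNIV)"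
    by (rule summable_on_SigmaI[where g = "\<lambda>n. \<Sum>k. norm (f n k)"]) (use g1 g2 in auto)
  hence "(\<lambda>x. norm ((\<lambda>(n,k). f n k) x)) summable_on UNIV \<times> UNIV"
    by (simp add: case_prod_unfold)
  hence "(\<lambda>(n,k). f n k) summable_on UNIV \<times> UNIV"
    by (rule abs_summable_summable)
  then obtain S where S: "((\<lambda>(n,k). f n k) has_sum S) (UNIV \<times> UNIV)"
    by (auto simp: summable_on_def)
  have i1: "((\<lambda>k. f n k) has_sum (\<Sum>k. f n k)) UNIV" for n
    using a[of n] by (intro norm_summable_imp_has_sum) (auto intro: summable_sums summable_norm_cancel)
  have i2: "((\<lambda>n. f n k) has_sum (\<Sum>n. f n k)) UNIV" for k
    using c[of k] by (intro norm_summable_imp_has_sum) (auto intro: summable_sums summable_norm_cancel)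
  have "((\<lambda>n. \<Sum>k. f n k) has_sum S) UNIV"
    by (rule has_sum_SigmaD[where B = "\<lambda>_. UNIV"]) (use S i1 in \<open>auto simp: case_prod_unfold\<close>)
  hence s1: "(\<lambda>n. \<Sum>k. f n k) sums S" by (rule has_sum_imp_sums)
  from S have S': "((\<lambda>(k,n). f n k) has_sum S) (UNIV \<times> UNIV)"
    by (subst (asm) has_sum_swap) (simp add: case_prod_unfold)
  have "((\<lambda>k. \<Sum>n. f n k) has_sum S) UNIV"
    by (rule has_sum_SigmaD[where B = "\<lambda>_. UNIV"]) (use S' i2 in \<open>auto simp: case_prod_unfold\<close>)
  hence s2: "(\<lambda>k. \<Sum>n. f n k) sums S" by (rule has_sum_imp_sums)
  from s1 s2 show ?thesis by (auto simp: sums_iff)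
qed
lemma cpow_real_exp:
  assumes "x > 0"
  shows "complex_of_real x powr w = exp (w * of_real (ln x))"
  using assms by (simp add: powr_def Ln_of_real)

lemma pochhammer_nonneg0: "(R::real) \<ge> 0 \<Longrightarrow> pochhammer R k \<ge> 0"
  by (induction k) (auto simp: pochhammer_Suc)

lemma norm_pochhammer_le:
  fixes s :: complex
  assumes "norm s \<le> R"
  shows "norm (pochhammer s k) \<le> pochhammer R k"
proof (induction k)
  case 0 then show ?case by simp
next
  case (Suc k)
  have "norm (s + of_nat k) \<le> R + real k"
    using assms norm_triangle_ineq[of s "of_nat k"] by simp
  moreover have "0 \<le> R" using assms norm_ge_zero[of s] by linarith
  ultimately have "norm (pochhammer s k) * norm (s + of_nat k) \<le> pochhammer R k * (R + real k)"
    using Suc by (intro mult_mono) (auto intro: pochhammer_nonneg0)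
  then show ?case by (simp add: pochhammer_Suc norm_mult)
qed

definition PB :: "real \<Rightarrow> nat \<Rightarrow> real" where
  "PB R k = pochhammer R k / fact k"

lemma pochhammer_nonneg': "(R::real) \<ge> 0 \<Longrightarrow> pochhammer R k \<ge> 0"
  by (induction k) (auto simp: pochhammer_Suc)

lemma PB_nonneg: "R \<ge> 0 \<Longrightarrow> PB R k \<ge> 0"
  by (simp add: PB_def pochhammer_nonneg')

lemma norm_gchoose_le:
  fixes s :: complex
  assumes "norm s \<le> R"
  shows "norm ((- s) gchoose k) \<le> PB R k"
proof -
  have "(- s) gchoose k = (- 1) ^ k * pochhammer s k / fact k"
    by (simp add: gbinomial_pochhammer)
  hence "norm ((- s) gchoose k) = norm (pochhammer s k) / fact k"
    by (simp add: norm_mult norm_divide norm_power)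
  also have "\<dots> \<le> pochhammer R k / fact k"
    using norm_pochhammer_le[OF assms] by (intro divide_right_mono) auto
  finally show ?thesis by (simp add: PB_def)
qed

lemma PB_sums:
  assumes "0 \<le> y" "y < 1"
  shows "(\<lambda>k. PB R k * y ^ k) sums ((1 - y) powr (- R))"
proof -
  have "(\<lambda>k. ((- R) gchoose k) * (- y) ^ k) sums (1 + (- y)) powr (- R)"
    using assms by (intro gen_binomial_real) auto
  moreover have "((- R) gchoose k) * (- y) ^ k = PB R k * y ^ k" for k
  proof -
    have h1: "((- R) gchoose k) = (- 1) ^ k * pochhammer R k / fact k"
      by (simp add: gbinomial_pochhammer)
    have h2: "(- y) ^ k = (- 1) ^ k * y ^ k" by (rule power_minus)
    have h3: "(-1::real)^k * (-1)^k = 1" by (simp flip: power_mult_distrib)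
    have aux: "c * c = 1 \<Longrightarrow> c * p / f * (c * z) = p / f * (z::real)" for c p f z
    proof -
      assume "c * c = 1"
      have "c * p / f * (c * z) = (c * c) * (p / f * z)" by (simp add: ac_simps)
      thus ?thesis using \<open>c * c = 1\<close> by simp
    qed
    show ?thesis unfolding h1 h2 PB_def by (rule aux[OF h3])
  qed
  ultimately show ?thesis by simp
qed

lemma gchoose_holo: "(\<lambda>s::complex. (- s) gchoose k) holomorphic_on A"
proof -
  have "(\<lambda>s::complex. (\<Prod>i = 0..<k. - s - of_nat i) / fact k) holomorphic_on A"
    by (intro holomorphic_intros) auto
  thus ?thesis by (simp add: gbinomial_prod_rev)
qed


locale zl =
  fixes L :: real and u :: "nat \<Rightarrow> complex \<Rightarrow> complex" and Q :: "complex \<Rightarrow> complex"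
  assumes L: "L > 0"
  and u_hol: "\<And>k. u k holomorphic_on UNIV"
  and u_nz: "\<And>k s. u k s \<noteq> 0"
  and u_bd: "\<And>k s. 1 \<le> 2 * Re s + 4 * real k \<Longrightarrow> norm (u k s) \<le> exp ((Re s + 2 * real k) * L)"
  and Q_hol: "Q holomorphic_on UNIV" and Q_nz: "\<And>s. Q s \<noteq> 0"
begin

definition den :: "nat \<Rightarrow> complex \<Rightarrow> complex" where
  "den k s = exp ((2 * s + 4 * of_nat k) * of_real L) - 1"
definition t :: "complex \<Rightarrow> nat \<Rightarrow> complex" where
  "t s k = ((- s) gchoose k) * u k s / den k s"
definition G :: "complex \<Rightarrow> complex" where "G s = Q s * (\<Sum>k. t s k)"
definition Pset :: "complex set" where "Pset = {s. \<exists>k. den k s = 0}"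
definition tail :: "nat \<Rightarrow> complex \<Rightarrow> complex" where "tail N s = (\<Sum>k. t s (k + N))"
definition MB :: "real \<Rightarrow> nat \<Rightarrow> real" where
  "MB R k = PB R k * exp ((R - 2 * real k) * L) / (1 - exp (- L))"
definition U :: "nat \<Rightarrow> complex set" where "U N = {s. Re s > (1 - 4 * real N) / 2}"

lemma norm_exp_den: "norm (exp ((2 * s + 4 * of_nat k) * of_real L)) = exp ((2 * Re s + 4 * real k) * L)"
  by simp

lemma den_nz:
  assumes "1 \<le> 2 * Re s + 4 * real k"
  shows "den k s \<noteq> 0"
proof
  assume "den k s = 0"
  hence "exp ((2 * s + 4 * of_nat k) * of_real L) = 1" by (simp add: den_def)
  hence "exp ((2 * Re s + 4 * real k) * L) = 1" by (metis norm_exp_den norm_one)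
  moreover have "(2 * Re s + 4 * real k) * L > 0" using assms L by simp
  ultimately show False by auto
qed

lemma t_bound:
  assumes A: "1 \<le> 2 * Re s + 4 * real k" and R: "norm s \<le> R"
  shows "norm (t s k) \<le> MB R k"
proof -
  define A where "A = Re s + 2 * real k"
  define X where "X = exp ((2 * Re s + 4 * real k) * L)"
  have XA: "X = exp (A * L) * exp (A * L)" unfolding X_def A_def by (simp add: algebra_simps flip: exp_add)
  have "L \<le> (2 * Re s + 4 * real k) * L" using A L by simp
  hence X: "X \<ge> exp L" unfolding X_def by simp
  have eL: "exp (- L) < 1" using L by simp
  have "X * exp (- L) \<ge> exp L * exp (- L)" using X by (intro mult_right_mono) auto
  hence X1: "X * exp (- L) \<ge> 1" by (simp flip: exp_add)
  define Y where "Y = X * (1 - exp (- L))"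
  have Ypos: "Y > 0" unfolding Y_def using eL X by (smt (verit) exp_gt_zero mult_pos_pos)
  have "norm (den k s) \<ge> X - 1"
    using norm_triangle_ineq2[of "exp ((2 * s + 4 * of_nat k) * of_real L)" 1]
    unfolding den_def X_def norm_exp_den by simp
  moreover have "X - 1 \<ge> Y" unfolding Y_def using X1 by (simp add: algebra_simps)
  ultimately have dn: "norm (den k s) \<ge> Y" by simp
  have nb: "norm ((- s) gchoose k) \<le> PB R k" by (rule norm_gchoose_le[OF R])
  have nu: "norm (u k s) \<le> exp (A * L)" unfolding A_def by (rule u_bd[OF A])
  have R0: "R \<ge> 0" using R norm_ge_zero[of s] by linarith
  have eqt: "norm (t s k) = norm ((- s) gchoose k) * norm (u k s) / norm (den k s)"
    by (simp add: t_def norm_mult norm_divide)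
  have nn: "0 \<le> PB R k * exp (A * L)" using PB_nonneg[OF R0] by simp
  have "norm ((- s) gchoose k) * norm (u k s) / norm (den k s) \<le> PB R k * exp (A * L) / Y"
    using nb nu dn Ypos nn by (intro frac_le mult_mono) (auto intro: PB_nonneg[OF R0])
  also have "PB R k * exp (A * L) / Y = PB R k * exp (- (A * L)) / (1 - exp (- L))"
  proof -
    have aux: "a > 0 \<Longrightarrow> c \<noteq> 0 \<Longrightarrow> p * a / (a * a * c) = p * (1 / a) / (c::real)" for a c p
      by (simp add: field_simps)
    have aux2: "p/(a*c) = p*inverse a/ (c::real)" for p a c by (simp add: divide_inverse)
    show ?thesis unfolding Y_def XA using eL by (subst aux) (auto simp: exp_minus aux2)
  qed
  also have "\<dots> \<le> PB R k * exp ((R - 2 * real k) * L) / (1 - exp (- L))"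
  proof -
    have "- Re s \<le> R" using abs_Re_le_cmod[of s] R by linarith
    hence "- (A * L) \<le> (R - 2 * real k) * L" unfolding A_def using L mult_right_mono[of "- Re s" R L]
      by (simp add: algebra_simps)
    hence e1: "exp (- (A*L)) \<le> exp ((R - 2 * real k) * L)" by simp
    have "PB R k * exp (- (A*L)) \<le> PB R k * exp ((R - 2 * real k) * L)"
      by (rule mult_left_mono[OF e1 PB_nonneg[OF R0]])
    thus ?thesis by (rule divide_right_mono) (use eL in simp)
  qed
  finally show ?thesis using eqt by (simp add: MB_def)
qed

lemma MB_summable:
  assumes "R \<ge> 0"
  shows "summable (MB R)"
proof -
  have "summable (\<lambda>k. PB R k * exp (-2 * L) ^ k)"
    using PB_sums[of "exp (-2 * L)" R] L by (auto simp: sums_iff)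
  hence SA: "summable (\<lambda>k. exp (R * L) / (1 - exp (- L)) * (PB R k * exp (-2 * L) ^ k))"
    by (intro summable_mult)
  have eqk: "exp (R * L) / (1 - exp (- L)) * (PB R k * exp (-2 * L) ^ k) = MB R k" for k
  proof -
    have "exp ((R - 2 * real k) * L) = exp (R * L) * exp (-2 * L) ^ k"
      by (simp add: algebra_simps flip: exp_add exp_of_nat_mult)
    thus ?thesis by (simp add: MB_def)
  qed
  have EQ: "(\<lambda>k. exp (R * L) / (1 - exp (- L)) * (PB R k * exp (-2 * L) ^ k)) = MB R"
    by (intro ext eqk)
  show ?thesis using SA unfolding EQ .
qed

lemma exN: "\<exists>N. 1 < 2 * Re s + 4 * real N"
proof -
  obtain N :: nat where "real N > - Re s + 1" using reals_Archimedean2 by blast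
  thus ?thesis by (intro exI[of _ N]) linarith
qed

lemma t_summable_norm: "summable (\<lambda>k. norm (t s k))"
proof -
  obtain N where N: "1 < 2 * Re s + 4 * real N" using exN by blast
  have "eventually (\<lambda>k. norm (norm (t s k)) \<le> MB (norm s) k) sequentially"
    unfolding eventually_at_top_linorder
    by (rule exI[of _ N]) (use N in \<open>auto intro!: t_bound\<close>)
  thus ?thesis by (rule summable_comparison_test_ev) (rule MB_summable, simp)
qed

lemma t_summable: "summable (t s)"
  using t_summable_norm summable_norm_cancel by blast

lemma U_open: "open (U N)"
  unfolding U_def by (rule open_halfspace_Re_gt)

lemma den_holo: "den k holomorphic_on A"
  unfolding den_def by (intro holomorphic_intros)

lemma t_holo:
  assumes "\<And>s. s \<in> A \<Longrightarrow> den k s \<noteq> 0"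
  shows "(\<lambda>s. t s k) holomorphic_on A"
  unfolding t_def using assms
  by (intro holomorphic_intros gchoose_holo den_holo holomorphic_on_subset[OF u_hol]) auto

lemma tail_holo: "tail N holomorphic_on U N"
proof -
  have "(\<lambda>s. suminf (\<lambda>i. t s (i + N))) holomorphic_on U N"
  proof (rule holomorphic_uniform_sequence[OF U_open])
    fix n
    show "(\<lambda>s. \<Sum>i<n. t s (i + N)) holomorphic_on U N"
      by (intro holomorphic_on_sum t_holo den_nz) (auto simp: U_def)
  next
    fix x assume x: "x \<in> U N"
    define d where "d = (Re x - (1 - 4 * real N) / 2) / 2"
    have d: "d > 0" using x by (simp add: U_def d_def)
    have sub: "cball x d \<subseteq> U N"
    proof
      fix s assume "s \<in> cball x d"
      hence "norm (x - s) \<le> d" by (simp add: dist_norm)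
      hence "Re x - Re s \<le> d" using abs_Re_le_cmod[of "x - s"] by simp
      from this x show "s \<in> U N" unfolding U_def d_def by (simp add: field_simps)
    qed
    have "uniform_limit (cball x d) (\<lambda>n s. \<Sum>i<n. t s (i + N)) (\<lambda>s. suminf (\<lambda>i. t s (i + N))) sequentially"
    proof (rule Weierstrass_m_test)
      fix n s assume s: "s \<in> cball x d"
      hence "s \<in> U N" using sub by auto
      hence "1 \<le> 2 * Re s + 4 * real (n + N)" by (simp add: U_def)
      moreover have "norm s \<le> norm x + d"
        using s norm_triangle_ineq2[of s x] by (simp add: dist_norm norm_minus_commute)
      ultimately show "norm (t s (n + N)) \<le> MB (norm x + d) (n + N)" by (rule t_bound)
    next
      show "summable (\<lambda>n. MB (norm x + d) (n + N))"
        using MB_summable[of "norm x + d"] d by (subst summable_iff_shift) auto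
    qed
    thus "\<exists>d>0. cball x d \<subseteq> U N \<and> uniform_limit (cball x d) (\<lambda>n s. \<Sum>i<n. t s (i + N)) (\<lambda>s. suminf (\<lambda>i. t s (i + N))) sequentially"
      using d sub by blast
  qed
  thus ?thesis unfolding tail_def .
qed

lemma suminf_split: "(\<Sum>k. t s k) = tail N s + (\<Sum>k<N. t s k)"
  unfolding tail_def by (rule suminf_split_initial_segment[OF t_summable])


lemma den_open: "open {s. den k s \<noteq> 0}"
proof -
  have "continuous_on UNIV (den k)" by (rule holomorphic_on_imp_continuous_on[OF den_holo])
  thus ?thesis using open_Collect_neq[of "den k" "\<lambda>_. 0"] by auto
qed

lemma den_zero_Re:
  assumes "den k s = 0"
  shows "Re s = - 2 * real k"
proof -
  from assms have "exp ((2 * s + 4 * of_nat k) * of_real L) = 1" by (simp add: den_def)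
  hence "exp ((2 * Re s + 4 * real k) * L) = 1" by (metis norm_exp_den norm_one)
  hence "(2 * Re s + 4 * real k) * L = 0" by simp
  thus ?thesis using L by simp
qed

lemma analytic_nonpole:
  assumes x: "x \<notin> Pset"
  shows "G analytic_on {x}"
proof -
  obtain N where N: "1 < 2 * Re x + 4 * real N" using exN by blast
  define S where "S = U N \<inter> (\<Inter>k\<in>{..<N}. {s. den k s \<noteq> 0})"
  have "open S" unfolding S_def using U_open den_open by auto
  moreover have "x \<in> S" using x N unfolding S_def U_def Pset_def by (auto simp: field_simps)
  moreover have "G holomorphic_on S"
  proof (rule holomorphic_transform)
    show "(\<lambda>s. Q s * (tail N s + (\<Sum>k<N. t s k))) holomorphic_on S"
      by (intro holomorphic_intros holomorphic_on_subset[OF Q_hol] holomorphic_on_subset[OF tail_holo]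
            t_holo) (auto simp: S_def)
    show "Q s * (tail N s + (\<Sum>k<N. t s k)) = G s" for s
      by (simp add: G_def suminf_split[of s N])
  qed
  ultimately show ?thesis using analytic_at by blast
qed

lemma gchoose_nz:
  assumes "Re p = - 2 * real j"
  shows "(- p) gchoose j \<noteq> 0"
proof -
  have "(\<Prod>i = 0..<j. - p - of_nat i) \<noteq> 0"
  proof (subst prod_zero_iff)
    show "\<not> (\<exists>i\<in>{0..<j}. - p - of_nat i = 0)"
    proof
      assume "\<exists>i\<in>{0..<j}. - p - of_nat i = 0"
      then obtain i where "i < j" "- p - of_nat i = 0" by auto
      hence "Re (- p - of_nat i) = 0" by simp
      thus False using assms \<open>i < j\<close> by simp
    qed
  qed simp
  thus ?thesis by (simp add: gbinomial_prod_rev)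
qed

lemma pole_struct:
  assumes "p \<in> Pset"
  shows "\<exists>r g. r > 0 \<and> g holomorphic_on ball p r \<and> g p \<noteq> 0 \<and>
           (\<forall>w\<in>ball p r - {p}. G w = g w * (w - p) powi (-1))"
proof -
  from assms obtain j where dj: "den j p = 0" by (auto simp: Pset_def)
  have Rep: "Re p = - 2 * real j" by (rule den_zero_Re[OF dj])
  define N where "N = 2 * j + 1"
  have jN: "j \<in> {..<N}" by (simp add: N_def)
  define S where "S = U N \<inter> (\<Inter>k\<in>{..<N}-{j}. {s. den k s \<noteq> 0})"
  have "open S" unfolding S_def using U_open den_open by auto
  have pS: "p \<in> S"
  proof -
    have "p \<in> U N" using Rep by (simp add: U_def N_def field_simps)
    moreover have "den k p \<noteq> 0" if "k \<noteq> j" for k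
    proof
      assume "den k p = 0"
      hence "Re p = - 2 * real k" by (rule den_zero_Re)
      with Rep that show False by simp
    qed
    ultimately show ?thesis by (auto simp: S_def)
  qed
  define A where "A s = tail N s + (\<Sum>k\<in>{..<N}-{j}. t s k)" for s
  have A_hol: "A holomorphic_on S"
    unfolding A_def
    by (intro holomorphic_intros holomorphic_on_subset[OF tail_holo] t_holo) (auto simp: S_def)
  have sumA: "(\<Sum>k. t s k) = A s + t s j" for s
    unfolding suminf_split[of s N] A_def using jN
    by (simp add: sum.remove[of "{..<N}" j] algebra_simps)
  define c where "c s = ((- s) gchoose j) * u j s" for s
  have c_hol: "c holomorphic_on UNIV"
    unfolding c_def by (intro holomorphic_intros gchoose_holo u_hol)
  have cp: "c p \<noteq> 0" unfolding c_def using gchoose_nz[OF Rep] u_nz by simp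
  define D1 where "D1 = (\<lambda>s. if s = p then deriv (den j) p else (den j s - den j p) / (s - p))"
  have D1_hol: "D1 holomorphic_on UNIV"
    unfolding D1_def by (rule pole_lemma_open[OF den_holo]) simp
  have "(den j has_field_derivative exp ((2 * p + 4 * of_nat j) * of_real L) * (2 * of_real L)) (at p)"
    unfolding den_def[abs_def] by (auto intro!: derivative_eq_intros)
  moreover have "exp ((2 * p + 4 * of_nat j) * of_real L) = 1" using dj by (simp add: den_def)
  ultimately have "deriv (den j) p = 2 * of_real L" by (simp add: DERIV_imp_deriv)
  hence D1p: "D1 p \<noteq> 0" using L by (simp add: D1_def)
  have "isCont D1 p"
    using D1_hol holomorphic_on_imp_continuous_on continuous_on_eq_continuous_at by blast
  then obtain r1 where r1: "r1 > 0" "\<And>y. dist p y < r1 \<Longrightarrow> D1 y \<noteq> 0"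
    using continuous_at_avoid[of p D1 0] D1p by auto
  obtain r2 where r2: "r2 > 0" "ball p r2 \<subseteq> S" using openE[OF \<open>open S\<close> pS] by blast
  define r where "r = min r1 r2"
  have r: "r > 0" using r1 r2 by (simp add: r_def)
  have ballS: "ball p r \<subseteq> S" using r2 by (auto simp: r_def)
  have D1nz: "D1 w \<noteq> 0" if "w \<in> ball p r" for w using that r1 by (auto simp: r_def)
  define g where "g s = Q s * (A s * D1 s * (s - p) + c s) / D1 s" for s
  have "g holomorphic_on ball p r"
    unfolding g_def
    by (intro holomorphic_intros holomorphic_on_subset[OF Q_hol] holomorphic_on_subset[OF A_hol ballS]
          holomorphic_on_subset[OF D1_hol] holomorphic_on_subset[OF c_hol] D1nz) auto
  moreover have "g p \<noteq> 0" unfolding g_def using Q_nz cp D1p by simp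
  moreover have "G w = g w * (w - p) powi (-1)" if w: "w \<in> ball p r - {p}" for w
  proof -
    have wp: "w \<noteq> p" using w by auto
    have Dw: "D1 w \<noteq> 0" using w D1nz by auto
    have dw: "den j w = D1 w * (w - p)" using wp dj by (simp add: D1_def)
    have "G w = Q w * (A w + c w / (D1 w * (w - p)))"
      unfolding G_def sumA by (simp add: t_def c_def dw)
    also have "\<dots> = g w * (w - p) powi (-1)"
      using Dw wp by (simp add: g_def power_int_minus field_simps)
    finally show ?thesis .
  qed
  ultimately show ?thesis using r by blast
qed

lemma G_analytic: "G analytic_on (UNIV - Pset)"
  using analytic_nonpole by (subst analytic_on_analytic_at) blast

lemma G_pole:
  assumes "p \<in> Pset"
  shows "is_pole G p \<and> zorder G p = -1 \<and> isolated_singularity_at G p"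
proof -
  obtain r g where r: "r > 0" and gh: "g holomorphic_on ball p r" and gp: "g p \<noteq> 0"
    and eq: "\<And>w. w \<in> ball p r - {p} \<Longrightarrow> G w = g w * (w - p) powi (-1)"
    using pole_struct[OF assms] by blast
  have "zorder G p = -1"
    by (rule zorder_eqI[of "ball p r" p g]) (use r gh gp eq in auto)
  moreover have "is_pole G p"
  proof -
    have "is_pole (\<lambda>w. g w / (w - p) ^ 1) p"
      by (rule is_pole_basic[of g "ball p r"]) (use r gh gp in auto)
    moreover have "eventually (\<lambda>w. G w = g w / (w - p) ^ 1) (at p)"
    proof -
      have "eventually (\<lambda>w. w \<in> ball p r \<and> w \<noteq> p \<and> w \<in> UNIV) (at p)"
        using eventually_at_ball'[OF r, of p UNIV] by simp
      thus ?thesis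
        by eventually_elim (use eq in \<open>auto simp: power_int_minus divide_inverse\<close>)
    qed
    ultimately show ?thesis using is_pole_cong[of G "\<lambda>w. g w / (w - p) ^ 1" p p] by simp
  qed
  moreover have "isolated_singularity_at G p"
  proof (rule isolated_singularity_at_holomorphic[of G "ball p r"])
    have "(\<lambda>w. g w * (w - p) powi (-1)) holomorphic_on ball p r - {p}"
      by (intro holomorphic_intros holomorphic_on_subset[OF gh]) auto
    thus "G holomorphic_on ball p r - {p}"
      by (rule holomorphic_transform) (use eq in auto)
  qed (use r in auto)
  ultimately show ?thesis by blast
qed

lemma G_merom: "G meromorphic_on UNIV"
  unfolding meromorphic_on_altdef
proof
  fix z :: complex
  show "isolated_singularity_at G z \<and> not_essential G z"
  proof (cases "z \<in> Pset")
    case True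
    thus ?thesis using G_pole[OF True] by (auto simp: not_essential_def)
  next
    case False
    thus ?thesis using analytic_nonpole[OF False]
      by (auto intro: isolated_singularity_at_analytic not_essential_analytic)
  qed
qed

end

lemma dirichlet_generic:
  fixes e q \<sigma> :: real and c :: nat and s :: complex
  assumes e: "e > 1" and q: "q > 0" and c: "c \<ge> 1" and sg: "\<bar>\<sigma>\<bar> = 1" and s: "Re s > 0"
  defines "V \<equiv> \<lambda>n::nat. (e ^ (2*n+c) + \<sigma> * (1/e) ^ (2*n+c)) / sqrt q"
  defines "w \<equiv> \<lambda>k::nat. exp (- (s + 2 * of_nat k) * of_real (ln e))"
  shows "summable (\<lambda>n. complex_of_real (V n) powr (-s)) \<and>
    (\<Sum>n. complex_of_real (V n) powr (-s)) = complex_of_real q powr (s/2) *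
       (\<Sum>k. ((-s) gchoose k) * of_real \<sigma> ^ k * w k ^ c / (1 - w k ^ 2))"
proof -
  define L where "L = ln e"
  have L: "L > 0" using e by (simp add: L_def)
  define z where "z = exp (-2 * L)"
  have z: "0 < z" "z < 1" using L by (auto simp: z_def)
  have z_eq: "z = 1 / e^2"
  proof -
    have "z = exp (-L) * exp (-L)" unfolding z_def by (simp flip: exp_add)
    moreover have "exp (-L) = 1 / e" using e by (simp add: exp_minus L_def inverse_eq_divide)
    ultimately show ?thesis by (simp add: power2_eq_square)
  qed
  define a where "a = exp (- s * of_real L)"
  define na where "na = exp (- Re s * L)"
  have na: "0 < na" "na < 1" using L s by (auto simp: na_def)
  have norm_a: "norm a = na" by (simp add: a_def na_def)
  define Qs where "Qs = complex_of_real q powr (s/2)"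
  define R where "R = norm s"
  have R0: "R \<ge> 0" by (simp add: R_def)
  define f where "f n k = ((-s) gchoose k) * of_real \<sigma> ^ k * w k ^ (2*n+c)" for n k
  have wk: "w k = a * of_real z ^ k" for k
  proof -
    have "- (s + 2 * of_nat k) * of_real L = - s * of_real L + of_nat k * of_real (-2 * L)"
      by (simp add: algebra_simps)
    hence "w k = exp (- s * of_real L + of_nat k * of_real (-2 * L))"
      unfolding w_def L_def[symmetric] by (rule arg_cong)
    also have "\<dots> = exp (- s * of_real L) * exp (of_real (-2 * L)) ^ k"
      by (simp only: exp_add exp_of_nat_mult)
    finally have "w k = exp (- s * of_real L) * exp (of_real (-2 * L)) ^ k" .
    thus ?thesis unfolding a_def z_def exp_of_real .
  qed
  have norm_w: "norm (w k) = na * z ^ k" for k using z by (simp add: wk norm_mult norm_a norm_power)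
  have norm_w1: "norm (w k) < 1" for k
  proof -
    have "na * z ^ k \<le> na * 1" using z na by (intro mult_left_mono power_le_one) auto
    thus ?thesis using na norm_w[of k] by linarith
  qed
  have Vterm: "complex_of_real (V n) powr (-s) = Qs * (a ^ (2*n+c) * of_real (1 + \<sigma> * z ^ (2*n+c)) powr (-s))"
    for n
  proof -
    define m where "m = 2*n+c"
    have zm: "0 < z ^ m" "z ^ m < 1" using z c by (auto simp: m_def power_less_one_iff)
    have pos: "1 + \<sigma> * z ^ m > 0"
    proof -
      have "\<bar>\<sigma> * z ^ m\<bar> < 1" using sg zm by (simp add: abs_mult)
      thus ?thesis by linarith
    qed
    have i1: "(1/e)^m = e^m * z^m"
    proof -
      have "1/e = e * z" using e by (simp add: z_eq power2_eq_square field_simps)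
      thus ?thesis by (simp add: power_mult_distrib)
    qed
    have "V n = (e^m + \<sigma> * (e^m * z^m)) / sqrt q"
      unfolding V_def m_def[symmetric] i1 ..
    hence Vn: "V n = (e ^ m / sqrt q) * (1 + \<sigma> * z ^ m)"
      by (simp add: field_simps)
    have em: "e ^ m / sqrt q > 0" using e q by simp
    have "complex_of_real (V n) powr (-s) =
          complex_of_real (e ^ m / sqrt q) powr (-s) * complex_of_real (1 + \<sigma> * z ^ m) powr (-s)"
      unfolding Vn of_real_mult using em pos by (intro powr_times_real) auto
    also have "complex_of_real (e ^ m / sqrt q) powr (-s) = Qs * a ^ m"
    proof -
      have lnm: "ln (e ^ m / sqrt q) = real m * L - ln q / 2"
        using e q by (simp add: ln_div ln_realpow ln_sqrt L_def)
      have "complex_of_real (e ^ m / sqrt q) powr (-s) = exp (-s * of_real (real m * L - ln q / 2))"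
        unfolding cpow_real_exp[OF em] lnm ..
      also have "-s * of_real (real m * L - ln q / 2) = s / 2 * of_real (ln q) + of_nat m * (- s * of_real L)"
        by (simp add: algebra_simps)
      also have "exp \<dots> = Qs * a ^ m"
        unfolding exp_add exp_of_nat_mult Qs_def cpow_real_exp[OF q] a_def ..
      finally show ?thesis .
    qed
    finally show ?thesis by (simp add: m_def mult_ac)
  qed
  have inner: "(\<lambda>k. f n k) sums (a ^ (2*n+c) * of_real (1 + \<sigma> * z ^ (2*n+c)) powr (-s))" for n
  proof -
    define m where "m = 2*n+c"
    have zm: "0 < z ^ m" "z ^ m < 1" using z c by (auto simp: m_def power_less_one_iff)
    have "norm (complex_of_real (\<sigma> * z ^ m)) < 1"
      unfolding norm_of_real using sg zm by (simp add: abs_mult)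
    from gen_binomial_complex[OF this, of "-s"]
    have "(\<lambda>k. ((-s) gchoose k) * complex_of_real (\<sigma> * z ^ m) ^ k) sums
            (1 + complex_of_real (\<sigma> * z ^ m)) powr (-s)" .
    from sums_mult[OF this, of "a ^ m"]
    have "(\<lambda>k. a ^ m * (((-s) gchoose k) * complex_of_real (\<sigma> * z ^ m) ^ k)) sums
            (a ^ m * (1 + complex_of_real (\<sigma> * z ^ m)) powr (-s))" .
    moreover have "a ^ m * (((-s) gchoose k) * complex_of_real (\<sigma> * z ^ m) ^ k) = f n k" for k
    proof -
      have "(complex_of_real z ^ m) ^ k = (complex_of_real z ^ k) ^ m"
        by (simp flip: power_mult add: mult.commute)
      thus ?thesis
        by (simp add: f_def wk m_def power_mult_distrib mult_ac)
    qed
    ultimately show ?thesis by (simp add: m_def)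
  qed
  have fbound: "norm (f n k) \<le> na ^ (2*n+c) * (PB R k * (z ^ (2*n+c)) ^ k)" for n k
  proof -
    have "norm (f n k) = norm ((-s) gchoose k) * (na ^ (2*n+c) * (z ^ (2*n+c)) ^ k)"
      using sg by (simp add: f_def norm_mult norm_power norm_w power_mult_distrib mult_ac
          flip: power_mult)
    also have "\<dots> \<le> PB R k * (na ^ (2*n+c) * (z ^ (2*n+c)) ^ k)"
      using z na by (intro mult_right_mono norm_gchoose_le) (auto simp: R_def)
    finally show ?thesis by (simp add: mult_ac)
  qed
  have PBz: "(\<lambda>k. PB R k * (z ^ (2*n+c)) ^ k) sums ((1 - z ^ (2*n+c)) powr (- R))" for n
    using z c by (intro PB_sums) (auto simp: power_less_one_iff)
  have sa: "summable (\<lambda>k. norm (f n k))" for n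
    by (rule summable_comparison_test[OF _ summable_mult[OF sums_summable[OF PBz]]])
       (use fbound in auto)
  define K where "K = (1 - z) powr (- R)"
  have sb_bound: "(\<Sum>k. norm (f n k)) \<le> K * na ^ c * (na ^ 2) ^ n" for n
  proof -
    have "(\<Sum>k. norm (f n k)) \<le> (\<Sum>k. na ^ (2*n+c) * (PB R k * (z ^ (2*n+c)) ^ k))"
      by (rule suminf_le[OF fbound sa summable_mult[OF sums_summable[OF PBz]]])
    also have "\<dots> = na ^ (2*n+c) * (1 - z ^ (2*n+c)) powr (- R)"
      using PBz[of n] by (simp add: suminf_mult sums_iff)
    also have "\<dots> \<le> na ^ (2*n+c) * K"
    proof -
      have "z ^ (2*n+c) \<le> z ^ 1" using z c by (intro power_decreasing) auto
      hence "(1 - z ^ (2*n+c)) powr (- R) \<le> (1 - z) powr (- R)"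
        using z R0 by (intro powr_mono2') auto
      thus ?thesis unfolding K_def using na by (intro mult_left_mono) auto
    qed
    also have "\<dots> = K * na ^ c * (na ^ 2) ^ n"
    proof -
      have "na ^ (2*n+c) = (na ^ 2) ^ n * na ^ c" by (simp only: power_add power_mult)
      thus ?thesis by (simp only: mult_ac)
    qed
    finally show ?thesis .
  qed
  have sb: "summable (\<lambda>n. \<Sum>k. norm (f n k))"
  proof (rule summable_comparison_test)
    show "\<exists>N. \<forall>n\<ge>N. norm (\<Sum>k. norm (f n k)) \<le> K * na ^ c * (na ^ 2) ^ n"
      using sb_bound by (auto intro!: exI[of _ 0] simp: suminf_nonneg sa)
    show "summable (\<lambda>n. K * na ^ c * (na ^ 2) ^ n)"
      using na by (intro summable_mult summable_geometric) (auto simp: power_less_one_iff)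
  qed
  have outer: "(\<lambda>n. f n k) sums (((-s) gchoose k) * of_real \<sigma> ^ k * w k ^ c / (1 - w k ^ 2))" for k
  proof -
    have n2: "norm (w k ^ 2) < 1" using norm_w1[of k]
      by (simp add: norm_power power_less_one_iff)
    have "(\<lambda>n. (((-s) gchoose k) * of_real \<sigma> ^ k * w k ^ c) * (w k ^ 2) ^ n) sums
           (((-s) gchoose k) * of_real \<sigma> ^ k * w k ^ c * (1 / (1 - w k ^ 2)))"
      by (intro sums_mult geometric_sums n2)
    moreover have "((-s) gchoose k) * of_real \<sigma> ^ k * w k ^ c * (w k ^ 2) ^ n = f n k" for n
    proof -
      have pw: "w k ^ (2*n+c) = (w k ^ 2) ^ n * w k ^ c" by (simp only: power_add power_mult)
      show ?thesis unfolding f_def pw by (simp only: mult_ac)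
    qed
    ultimately show ?thesis by simp
  qed
  have sc: "summable (\<lambda>n. norm (f n k))" for k
  proof -
    have "summable (\<lambda>n. norm (((-s) gchoose k) * of_real \<sigma> ^ k * w k ^ c) * (norm (w k) ^ 2) ^ n)"
      using norm_w1[of k] norm_ge_zero[of "w k"]
      by (intro summable_mult summable_geometric) (auto simp: power_less_one_iff)
    moreover have "norm (((-s) gchoose k) * of_real \<sigma> ^ k * w k ^ c) * (norm (w k) ^ 2) ^ n = norm (f n k)" for n
    proof -
      have pw: "w k ^ (2*n+c) = (w k ^ 2) ^ n * w k ^ c" by (simp only: power_add power_mult)
      show ?thesis unfolding f_def pw norm_mult norm_power by (simp only: mult_ac)
    qed
    ultimately show ?thesis by simp
  qed
  from double_sum_swap[of f, OF sa sb sc]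
  have sw: "summable (\<lambda>n. \<Sum>k. f n k)" "(\<Sum>n. \<Sum>k. f n k) = (\<Sum>k. \<Sum>n. f n k)" by auto
  have VT: "complex_of_real (V n) powr (-s) = Qs * (\<Sum>k. f n k)" for n
    using Vterm[of n] inner[of n] by (simp add: sums_iff)
  have "summable (\<lambda>n. complex_of_real (V n) powr (-s))"
    unfolding VT by (rule summable_mult[OF sw(1)])
  moreover have "(\<Sum>n. complex_of_real (V n) powr (-s)) = Qs * (\<Sum>k. \<Sum>n. f n k)"
    unfolding VT suminf_mult[OF sw(1)] sw(2) ..
  moreover have "(\<Sum>n. f n k) = ((-s) gchoose k) * of_real \<sigma> ^ k * w k ^ c / (1 - w k ^ 2)" for k
    using outer[of k] by (simp add: sums_iff)
  ultimately show ?thesis by (simp add: Qs_def)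
qed


lemma pole_set_char:
  assumes e: "e > 1"
  shows "s \<in> pole_set e \<longleftrightarrow> (\<exists>k::nat. exp ((2 * s + 4 * of_nat k) * of_real (ln e)) - 1 = 0)"
proof
  define L where "L = ln e"
  have L: "L > 0" using e by (simp add: L_def)
  assume "s \<in> pole_set e"
  then obtain k :: nat and m :: int where s: "s = - 2 * of_nat k + complex_of_real (pi * of_int m / ln e) * \<i>"
    by (auto simp: pole_set_def)
  have h1: "(2 * s + 4 * of_nat k) * of_real (ln e) = complex_of_real (2 * pi * of_int m) * \<i>"
    using L unfolding s L_def[symmetric] by (simp add: field_simps)
  have h2: "exp (complex_of_real (2 * pi * of_int m) * \<i>) = 1"
    by (subst exp_eq_1) (auto intro!: exI[of _ m])
  show "\<exists>k::nat. exp ((2 * s + 4 * of_nat k) * of_real (ln e)) - 1 = 0"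
    by (rule exI[of _ k]) (simp only: h1 h2 diff_self)
next
  define L where "L = ln e"
  have L: "L > 0" using e by (simp add: L_def)
  assume "\<exists>k::nat. exp ((2 * s + 4 * of_nat k) * of_real (ln e)) - 1 = 0"
  then obtain k :: nat where "exp ((2 * s + 4 * of_nat k) * of_real L) = 1" by (auto simp: L_def)
  then obtain n :: int where re: "(2 * Re s + 4 * real k) * L = 0" and im: "2 * Im s * L = of_int (2 * n) * pi"
    by (subst (asm) exp_eq_1) auto
  have "Re s = - 2 * real k" using re L by simp
  moreover have "Im s = pi * of_int n / L" using im L by (simp add: field_simps)
  ultimately have "s = - 2 * of_nat k + complex_of_real (pi * of_int n / ln e) * \<i>"
    by (intro complex_eqI) (simp_all add: L_def)
  thus "s \<in> pole_set e" unfolding pole_set_def by blast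
qed

lemma w_odd: "(W::complex) \<noteq> 0 \<Longrightarrow> inverse W ^ 1 / (1 - inverse W ^ 2) = W / (W ^ 2 - 1)"
proof (cases "W ^ 2 = 1")
  case True
  assume "W \<noteq> 0"
  have "inverse W ^ 2 = 1" using True by (simp add: power_inverse)
  thus ?thesis using True by simp
next
  case False
  assume "W \<noteq> 0"
  hence "inverse W ^ 2 \<noteq> 1" using False by (auto simp: power_inverse)
  thus ?thesis using False \<open>W \<noteq> 0\<close> by (simp add: field_simps power2_eq_square)
qed

lemma w_even: "(W::complex) \<noteq> 0 \<Longrightarrow> inverse W ^ 2 / (1 - inverse W ^ 2) = 1 / (W ^ 2 - 1)"
proof (cases "W ^ 2 = 1")
  case True
  assume "W \<noteq> 0"
  have "inverse W ^ 2 = 1" using True by (simp add: power_inverse)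
  thus ?thesis using True by simp
next
  case False
  assume "W \<noteq> 0"
  hence "inverse W ^ 2 \<noteq> 1" using False by (auto simp: power_inverse)
  thus ?thesis using False \<open>W \<noteq> 0\<close> by (simp add: field_simps power2_eq_square)
qed

theorem mainTheorem3:
  fixes D :: int and e :: real
  assumes "D > 0" and "squarefree D"
    and "is_fundamental_unit D e"
    and "qnorm D e = -1"
  shows "(\<forall>s. s \<notin> pole_set e \<longrightarrow>
            summable (\<lambda>k. norm (G_odd_term D e s k)) \<and>
            summable (\<lambda>k. norm (G_even_term D e s k)))
     \<and> (\<forall>s. Re s > 0 \<longrightarrow>
            summable (\<lambda>n. complex_of_real (FD D e (2 * n + 1)) powr (- s)) \<and>
            summable (\<lambda>n. complex_of_real (FD D e (2 * n + 2)) powr (- s)) \<and>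
            Z_odd D e s = G_odd D e s \<and> Z_even D e s = G_even D e s)
     \<and> G_odd D e meromorphic_on UNIV \<and> G_even D e meromorphic_on UNIV
     \<and> G_odd D e analytic_on (UNIV - pole_set e)
     \<and> G_even D e analytic_on (UNIV - pole_set e)
     \<and> (\<forall>p \<in> pole_set e. is_pole (G_odd D e) p \<and> zorder (G_odd D e) p = -1
                        \<and> is_pole (G_even D e) p \<and> zorder (G_even D e) p = -1)"
proof -
  have e: "e > 1" using assms(3) by (simp add: is_fundamental_unit_def)
  define L where "L = ln e"
  have L: "L > 0" using e by (simp add: L_def)
  have qc: "qconj D e = - 1 / e" using assms(4) e by (simp add: qnorm_def field_simps)
  define q where "q = real_of_int (qD D)"
  have q: "q > 0" using assms(1) by (simp add: q_def qD_def)
  define Qf where "Qf = (\<lambda>s. complex_of_real q powr (s / 2))"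
  have Qf_eq: "Qf = (\<lambda>s. exp (s / 2 * of_real (ln q)))"
    using q by (simp add: Qf_def cpow_real_exp)
  have Qhol: "Qf holomorphic_on UNIV" unfolding Qf_eq by (intro holomorphic_intros) auto
  have Qnz: "Qf s \<noteq> 0" for s unfolding Qf_eq by simp
  have cp: "complex_of_real e powr w = exp (w * of_real L)" for w
    using e by (simp add: cpow_real_exp L_def)
  define uo where "uo = (\<lambda>(k::nat) s. exp ((s + 2 * of_nat k) * complex_of_real L))"
  define ue where "ue = (\<lambda>(k::nat) (s::complex). (-1::complex) ^ k)"
  interpret O: zl L uo Qf
  proof
    show "uo k holomorphic_on UNIV" for k unfolding uo_def by (intro holomorphic_intros)
    show "uo k s \<noteq> 0" for k s by (simp add: uo_def)
    show "norm (uo k s) \<le> exp ((Re s + 2 * real k) * L)" for k s by (simp add: uo_def)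
  qed (use L Qhol Qnz in auto)
  interpret E: zl L ue Qf
  proof
    show "ue k holomorphic_on UNIV" for k unfolding ue_def by (intro holomorphic_intros)
    show "ue k s \<noteq> 0" for k s by (simp add: ue_def)
    show "norm (ue k s) \<le> exp ((Re s + 2 * real k) * L)" if "1 \<le> 2 * Re s + 4 * real k" for k s
    proof -
      have "0 \<le> (Re s + 2 * real k) * L" using that L by simp
      thus ?thesis by (simp add: ue_def norm_power)
    qed
  qed (use L Qhol Qnz in auto)
  have to: "G_odd_term D e s k = O.t s k" for s k
    unfolding G_odd_term_def O.t_def O.den_def by (simp add: uo_def cp)
  have te: "G_even_term D e s k = E.t s k" for s k
    unfolding G_even_term_def E.t_def E.den_def by (simp add: ue_def cp)
  have Go: "G_odd D e = O.G"
    unfolding O.G_def by (rule ext) (simp add: G_odd_def to Qf_def q_def)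
  have Ge: "G_even D e = E.G"
    unfolding E.G_def by (rule ext) (simp add: G_even_def te Qf_def q_def)
  have Po: "O.Pset = pole_set e"
    unfolding O.Pset_def O.den_def using pole_set_char[OF e] by (auto simp: L_def)
  have Pe: "E.Pset = pole_set e"
    unfolding E.Pset_def E.den_def using pole_set_char[OF e] by (auto simp: L_def)
  have part1: "\<forall>s. s \<notin> pole_set e \<longrightarrow>
            summable (\<lambda>k. norm (G_odd_term D e s k)) \<and> summable (\<lambda>k. norm (G_even_term D e s k))"
    using O.t_summable_norm E.t_summable_norm by (simp add: to te)
  have part2: "summable (\<lambda>n. complex_of_real (FD D e (2 * n + 1)) powr (- s)) \<and>
            summable (\<lambda>n. complex_of_real (FD D e (2 * n + 2)) powr (- s)) \<and>
            Z_odd D e s = G_odd D e s \<and> Z_even D e s = G_even D e s" if s: "Re s > 0" for s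
  proof -
    define w where "w = (\<lambda>k::nat. exp (- (s + 2 * of_nat k) * of_real (ln e)))"
    have FDo: "FD D e (2 * n + 1) = (e ^ (2*n+1) + 1 * (1/e) ^ (2*n+1)) / sqrt q" for n
      by (simp add: FD_def qc q_def power_minus_odd field_simps)
    have FDe: "FD D e (2 * n + 2) = (e ^ (2*n+2) + (-1) * (1/e) ^ (2*n+2)) / sqrt q" for n
    proof -
      have "(- (1 / e)) ^ (2 * n + 2) = (1 / e) ^ (2 * n + 2)"
        by (rule power_minus_even) simp
      hence "(- 1 / e) ^ (2 * n + 2) = (1 / e) ^ (2 * n + 2)" by simp
      thus ?thesis by (simp add: FD_def qc q_def)
    qed
    have Do: "summable (\<lambda>n. complex_of_real ((e ^ (2*n+1) + 1 * (1/e) ^ (2*n+1)) / sqrt q) powr (-s)) \<and>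
      (\<Sum>n. complex_of_real ((e ^ (2*n+1) + 1 * (1/e) ^ (2*n+1)) / sqrt q) powr (-s)) = complex_of_real q powr (s/2) *
       (\<Sum>k. ((-s) gchoose k) * of_real 1 ^ k * w k ^ 1 / (1 - w k ^ 2))"
      unfolding w_def by (rule dirichlet_generic[OF e q _ _ s]) auto
    have De: "summable (\<lambda>n. complex_of_real ((e ^ (2*n+2) + (-1) * (1/e) ^ (2*n+2)) / sqrt q) powr (-s)) \<and>
      (\<Sum>n. complex_of_real ((e ^ (2*n+2) + (-1) * (1/e) ^ (2*n+2)) / sqrt q) powr (-s)) = complex_of_real q powr (s/2) *
       (\<Sum>k. ((-s) gchoose k) * of_real (-1) ^ k * w k ^ 2 / (1 - w k ^ 2))"
      unfolding w_def by (rule dirichlet_generic[OF e q _ _ s]) auto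
    have wW: "w k = inverse (exp ((s + 2 * of_nat k) * of_real L))" for k
      unfolding w_def L_def mult_minus_left exp_minus ..
    have W2: "exp ((2 * s + 4 * of_nat k) * of_real L) = exp ((s + 2 * of_nat k) * of_real L) ^ 2" for k
    proof -
      have "(2 * s + 4 * of_nat k) * of_real L = of_nat 2 * ((s + 2 * of_nat k) * of_real L)"
        by (simp add: algebra_simps)
      thus ?thesis by (simp only: exp_of_nat_mult)
    qed
    have eo: "((-s) gchoose k) * of_real 1 ^ k * w k ^ 1 / (1 - w k ^ 2) = G_odd_term D e s k" for k
    proof -
      have "w k ^ 1 / (1 - w k ^ 2) = exp ((s + 2 * of_nat k) * of_real L) /
              (exp ((s + 2 * of_nat k) * of_real L) ^ 2 - 1)"
        unfolding wW by (rule w_odd) simp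
      hence "((-s) gchoose k) * of_real 1 ^ k * w k ^ 1 / (1 - w k ^ 2) =
        ((-s) gchoose k) * (exp ((s + 2 * of_nat k) * of_real L) /
              (exp ((s + 2 * of_nat k) * of_real L) ^ 2 - 1))"
        by (metis mult.right_neutral of_real_1 power_one times_divide_eq_right)
      thus ?thesis by (simp add: G_odd_term_def cp W2)
    qed
    have ee: "((-s) gchoose k) * of_real (-1) ^ k * w k ^ 2 / (1 - w k ^ 2) = G_even_term D e s k" for k
    proof -
      have "w k ^ 2 / (1 - w k ^ 2) = 1 / (exp ((s + 2 * of_nat k) * of_real L) ^ 2 - 1)"
        unfolding wW by (rule w_even) simp
      hence "((-s) gchoose k) * of_real (-1) ^ k * w k ^ 2 / (1 - w k ^ 2) =
        ((-s) gchoose k) * (-1) ^ k * (1 / (exp ((s + 2 * of_nat k) * of_real L) ^ 2 - 1))"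
        by (metis of_real_1 of_real_minus times_divide_eq_right)
      thus ?thesis by (simp add: G_even_term_def cp W2)
    qed
    show ?thesis
      using Do De unfolding eo ee FDo [symmetric] FDe [symmetric]
      by (simp add: Z_odd_def Z_even_def G_odd_def G_even_def q_def)
  qed
  have m1: "G_odd D e meromorphic_on UNIV" unfolding Go by (rule O.G_merom)
  have m2: "G_even D e meromorphic_on UNIV" unfolding Ge by (rule E.G_merom)
  have a1: "G_odd D e analytic_on (UNIV - pole_set e)" unfolding Go Po[symmetric] by (rule O.G_analytic)
  have a2: "G_even D e analytic_on (UNIV - pole_set e)" unfolding Ge Pe[symmetric] by (rule E.G_analytic)
  have p1: "is_pole (G_odd D e) p \<and> zorder (G_odd D e) p = -1" if "p \<in> pole_set e" for p
    unfolding Go using O.G_pole[of p] that Po by auto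
  have p2: "is_pole (G_even D e) p \<and> zorder (G_even D e) p = -1" if "p \<in> pole_set e" for p
    unfolding Ge using E.G_pole[of p] that Pe by auto
  show ?thesis using part1 part2 m1 m2 a1 a2 p1 p2 by blast
qed

end
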